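(* Let $K$ be a field and $f\colon R\to S$ a morphism of Zinbiel algebras. If $H^2_{\mathrm{Zinb}}(f,f)=0$, then $f$ is rigid.
   Context: A Zinbiel algebra over $K$ is a $K$-vector space $R$ with bilinear product $x\cdot y$ (also written $m_R(x,y)$) satisfying $(x\cdot y)\cdot z=x\cdot(y\cdot z)+x\cdot(z\cdot y)$. A morphism $f\colon R\to S$ is a linear map with $f(x\cdot y)=f(x)\cdot f(y)$. $R$ is a bimodule over itself, $S$ over itself, and $S$ is an $R$-bimodule via $r\cdot s=f(r)\cdot s$, $s\cdot r=s\cdot f(r)$. For a bimodule $A$ over $R$ and $1\le n\le4$, $C^n_{\mathrm{Zinb}}(R,A)=\mathrm{Hom}_K(R^{\otimes n},A)$ with $(d^1\varphi)(x,y)=x\cdot\varphi(y)-\varphi(x\cdot y)+\varphi(x)\cdot y$, $(d^2\varphi)(x,y,z)=x\cdot(\varphi(y,z)+\varphi(z,y))-\varphi(x\cdot y,z)+\varphi(x,y\cdot z+z\cdot y)-\varphi(x,y)\cdot z$, $(d^3\varphi)(x,y,z,w)=x\cdot\{\varphi(y,z,w)-\varphi(z,w,y)+\varphi(z,y,w)-\varphi(w,z,y)\}-\varphi(x\cdot y,z,w)+\varphi(x,y\cdot z+z\cdot y,w)-\varphi(x,y,z\cdot w+w\cdot z)+\varphi(x,y,z)\cdot w$. The deformation complex: $C^0_{\mathrm{Zinb}}(R,S)=0$, $d^0=0$, $C^n_{\mathrm{Zinb}}(f,f)=C^n_{\mathrm{Zinb}}(R,R)\times C^n_{\mathrm{Zinb}}(S,S)\times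 C^{n-1}_{\mathrm{Zinb}}(R,S)$ ($1\le n\le4$), $d^i_f(\xi;\pi;\varphi)=(d^i\xi;d^i\pi;f\xi-\pi f-d^{i-1}\varphi)$ with $(f\xi)(x_1,\dots)=f(\xi(x_1,\dots))$, $(\pi f)(x_1,\dots)=\pi(f(x_1),\dots)$. $H^2_{\mathrm{Zinb}}(f,f)=\ker d^2_f/\operatorname{im} d^1_f$. A deformation of $f$ is a formal power series $\Theta_t=\sum_{i\ge0}\theta_it^i$ with $\theta_0=(m_R;m_S;f)$ and $\theta_i=(m_{R,i};m_{S,i};f_i)\in C^2_{\mathrm{Zinb}}(f,f)$, such that for $*=R,S$ the bilinear map $M_{*,t}=\sum_i m_{*,i}t^i$ satisfies $M_{*,t}(M_{*,t}(x,y),z)=M_{*,t}(x,M_{*,t}(y,z))+M_{*,t}(x,M_{*,t}(z,y))$, and $F_t=\sum_if_it^i$ satisfies $F_t(M_{R,t}(x,y))=M_{S,t}(F_t(x),F_t(y))$. A formal isomorphism of $f$ is $\Phi_t=(\Phi_{R,t};\Phi_{S,t})=\sum_{i\ge0}(\phi_{R,i};\phi_{S,i})t^i$ with $(\phi_{R,0};\phi_{S,0})=(\mathrm{Id}_R;\mathrm{Id}_S)$ and $\phi_{R,i}\in\mathrm{Hom}_K(R,R)$, $\phi_{S,i}\in\mathrm{Hom}_K(S,S)$. Deformations $\Theta_t=(M_{R,t};M_{S,t};F_t)$ and $\overline{\Theta}_t=(\overline{M}_{R,t};\overline{M}_{S,t};\overline{F}_t)$ are equivalent if for some formal isomorphism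 $\Phi_t$: $\overline{M}_{R,t}=\Phi_{R,t}M_{R,t}\Phi_{R,t}^{-1}$ (meaning $(x,y)\mapsto\Phi_{R,t}(M_{R,t}(\Phi_{R,t}^{-1}x,\Phi_{R,t}^{-1}y))$), likewise for $S$, and $\overline{F}_t=\Phi_{S,t}F_t\Phi_{R,t}^{-1}$. The trivial deformation is $\Theta_t=\theta_0=(m_R;m_S;f)$. The morphism $f$ is rigid if every deformation of $f$ is equivalent to the trivial deformation. *)

theory Defs
  imports Complex_Main
begin

text \<open>K-vector spaces are types with a scalar multiplication by a field 'k
  (locale vector_space); K-linear maps are Vector_Spaces.linear.
  Hom_K(R (x) R, A) is represented by K-bilinear maps R => R => A.\<close>

definition bilin ::
  "('k::field \<Rightarrow> 'a::ab_group_add \<Rightarrow> 'a) \<Rightarrow> ('k \<Rightarrow> 'b::ab_group_add \<Rightarrow> 'b) \<Rightarrow>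
   ('k \<Rightarrow> 'c::ab_group_add \<Rightarrow> 'c) \<Rightarrow> ('a \<Rightarrow> 'b \<Rightarrow> 'c) \<Rightarrow> bool" where
  "bilin s1 s2 s3 g \<longleftrightarrow>
     (\<forall>x. Vector_Spaces.linear s2 s3 (g x)) \<and> (\<forall>y. Vector_Spaces.linear s1 s3 (\<lambda>x. g x y))"

definition zinbiel :: "('k::field \<Rightarrow> 'r::ab_group_add \<Rightarrow> 'r) \<Rightarrow> ('r \<Rightarrow> 'r \<Rightarrow> 'r) \<Rightarrow> bool" where
  "zinbiel s m \<longleftrightarrow> vector_space s \<and> bilin s s s m \<and>
     (\<forall>x y z. m (m x y) z = m x (m y z) + m x (m z y))"

definition zinb_morphism ::
  "('k::field \<Rightarrow> 'r::ab_group_add \<Rightarrow> 'r) \<Rightarrow> ('r \<Rightarrow> 'r \<Rightarrow> 'r) \<Rightarrow>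
   ('k \<Rightarrow> 's::ab_group_add \<Rightarrow> 's) \<Rightarrow> ('s \<Rightarrow> 's \<Rightarrow> 's) \<Rightarrow> ('r \<Rightarrow> 's) \<Rightarrow> bool" where
  "zinb_morphism sR mR sS mS f \<longleftrightarrow> zinbiel sR mR \<and> zinbiel sS mS \<and>
     Vector_Spaces.linear sR sS f \<and> (\<forall>x y. f (mR x y) = mS (f x) (f y))"

text \<open>Zinbiel coboundaries with values in a bimodule A given by left action l and right action r.\<close>

definition zd1 :: "('r \<Rightarrow> 'r \<Rightarrow> 'r) \<Rightarrow> ('r \<Rightarrow> 'a \<Rightarrow> 'a) \<Rightarrow> ('a \<Rightarrow> 'r \<Rightarrow> 'a) \<Rightarrow>
    ('r \<Rightarrow> 'a::ab_group_add) \<Rightarrow> 'r \<Rightarrow> 'r \<Rightarrow> 'a" where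
  "zd1 m l r \<phi> = (\<lambda>x y. l x (\<phi> y) - \<phi> (m x y) + r (\<phi> x) y)"

definition zd2 :: "('r \<Rightarrow> 'r \<Rightarrow> 'r::ab_group_add) \<Rightarrow> ('r \<Rightarrow> 'a \<Rightarrow> 'a) \<Rightarrow> ('a \<Rightarrow> 'r \<Rightarrow> 'a) \<Rightarrow>
    ('r \<Rightarrow> 'r \<Rightarrow> 'a::ab_group_add) \<Rightarrow> 'r \<Rightarrow> 'r \<Rightarrow> 'r \<Rightarrow> 'a" where
  "zd2 m l r \<phi> = (\<lambda>x y z. l x (\<phi> y z + \<phi> z y) - \<phi> (m x y) z
                        + \<phi> x (m y z + m z y) - r (\<phi> x y) z)"

text \<open>Deformation complex of f. C^1(f,f) = C^1(R,R) x C^1(S,S) x C^0(R,S) with C^0(R,S) = 0,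
  so its elements are represented by pairs (xi, pi).\<close>

definition d1_f :: "('r \<Rightarrow> 'r \<Rightarrow> 'r::ab_group_add) \<Rightarrow> ('s \<Rightarrow> 's \<Rightarrow> 's::ab_group_add) \<Rightarrow> ('r \<Rightarrow> 's) \<Rightarrow>
    ('r \<Rightarrow> 'r) \<times> ('s \<Rightarrow> 's) \<Rightarrow>
    ('r \<Rightarrow> 'r \<Rightarrow> 'r) \<times> ('s \<Rightarrow> 's \<Rightarrow> 's) \<times> ('r \<Rightarrow> 's)" where
  "d1_f mR mS f = (\<lambda>(\<xi>, \<pi>). (zd1 mR mR mR \<xi>, zd1 mS mS mS \<pi>, (\<lambda>x. f (\<xi> x) - \<pi> (f x))))"

definition d2_f :: "('r \<Rightarrow> 'r \<Rightarrow> 'r::ab_group_add) \<Rightarrow> ('s \<Rightarrow> 's \<Rightarrow> 's::ab_group_add) \<Rightarrow> ('r \<Rightarrow> 's) \<Rightarrow>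
    ('r \<Rightarrow> 'r \<Rightarrow> 'r) \<times> ('s \<Rightarrow> 's \<Rightarrow> 's) \<times> ('r \<Rightarrow> 's) \<Rightarrow>
    ('r \<Rightarrow> 'r \<Rightarrow> 'r \<Rightarrow> 'r) \<times> ('s \<Rightarrow> 's \<Rightarrow> 's \<Rightarrow> 's) \<times> ('r \<Rightarrow> 'r \<Rightarrow> 's)" where
  "d2_f mR mS f = (\<lambda>(\<xi>, \<pi>, \<phi>). (zd2 mR mR mR \<xi>, zd2 mS mS mS \<pi>,
      (\<lambda>x y. f (\<xi> x y) - \<pi> (f x) (f y)
             - zd1 mR (\<lambda>x s. mS (f x) s) (\<lambda>s x. mS s (f x)) \<phi> x y)))"

definition C1_f :: "('k::field \<Rightarrow> 'r::ab_group_add \<Rightarrow> 'r) \<Rightarrow> ('k \<Rightarrow> 's::ab_group_add \<Rightarrow> 's) \<Rightarrow>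
    (('r \<Rightarrow> 'r) \<times> ('s \<Rightarrow> 's)) set" where
  "C1_f sR sS = {(\<xi>, \<pi>). Vector_Spaces.linear sR sR \<xi> \<and> Vector_Spaces.linear sS sS \<pi>}"

definition C2_f :: "('k::field \<Rightarrow> 'r::ab_group_add \<Rightarrow> 'r) \<Rightarrow> ('k \<Rightarrow> 's::ab_group_add \<Rightarrow> 's) \<Rightarrow>
    (('r \<Rightarrow> 'r \<Rightarrow> 'r) \<times> ('s \<Rightarrow> 's \<Rightarrow> 's) \<times> ('r \<Rightarrow> 's)) set" where
  "C2_f sR sS = {(\<xi>, \<pi>, \<phi>). bilin sR sR sR \<xi> \<and> bilin sS sS sS \<pi> \<and> Vector_Spaces.linear sR sS \<phi>}"

definition H2_f_zero :: "('k::field \<Rightarrow> 'r::ab_group_add \<Rightarrow> 'r) \<Rightarrow> ('r \<Rightarrow> 'r \<Rightarrow> 'r) \<Rightarrow>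
   ('k \<Rightarrow> 's::ab_group_add \<Rightarrow> 's) \<Rightarrow> ('s \<Rightarrow> 's \<Rightarrow> 's) \<Rightarrow> ('r \<Rightarrow> 's) \<Rightarrow> bool" where
  "H2_f_zero sR mR sS mS f \<longleftrightarrow>
     (\<forall>c \<in> C2_f sR sS. d2_f mR mS f c = (\<lambda>x y z. 0, \<lambda>x y z. 0, \<lambda>x y. 0) \<longrightarrow>
        (\<exists>b \<in> C1_f sR sS. d1_f mR mS f b = c))"

text \<open>Deformations: formal power series given by their coefficient sequences; the
  power series identities are required coefficientwise (coefficient of t^n).\<close>

definition is_deformation ::
  "('k::field \<Rightarrow> 'r::ab_group_add \<Rightarrow> 'r) \<Rightarrow> ('r \<Rightarrow> 'r \<Rightarrow> 'r) \<Rightarrow>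
   ('k \<Rightarrow> 's::ab_group_add \<Rightarrow> 's) \<Rightarrow> ('s \<Rightarrow> 's \<Rightarrow> 's) \<Rightarrow> ('r \<Rightarrow> 's) \<Rightarrow>
   (nat \<Rightarrow> 'r \<Rightarrow> 'r \<Rightarrow> 'r) \<Rightarrow> (nat \<Rightarrow> 's \<Rightarrow> 's \<Rightarrow> 's) \<Rightarrow> (nat \<Rightarrow> 'r \<Rightarrow> 's) \<Rightarrow> bool" where
  "is_deformation sR mR sS mS f MR MS F \<longleftrightarrow>
     MR 0 = mR \<and> MS 0 = mS \<and> F 0 = f \<and>
     (\<forall>i. (MR i, MS i, F i) \<in> C2_f sR sS) \<and>
     (\<forall>n x y z. (\<Sum>i\<le>n. MR i (MR (n - i) x y) z)
               = (\<Sum>i\<le>n. MR i x (MR (n - i) y z) + MR i x (MR (n - i) z y))) \<and>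
     (\<forall>n x y z. (\<Sum>i\<le>n. MS i (MS (n - i) x y) z)
               = (\<Sum>i\<le>n. MS i x (MS (n - i) y z) + MS i x (MS (n - i) z y))) \<and>
     (\<forall>n x y. (\<Sum>i\<le>n. F i (MR (n - i) x y))
             = (\<Sum>i\<le>n. \<Sum>j\<le>n - i. MS i (F j x) (F (n - i - j) y)))"

definition formal_iso :: "('k::field \<Rightarrow> 'a::ab_group_add \<Rightarrow> 'a) \<Rightarrow> (nat \<Rightarrow> 'a \<Rightarrow> 'a) \<Rightarrow> bool" where
  "formal_iso s \<Phi> \<longleftrightarrow> \<Phi> 0 = id \<and> (\<forall>i. Vector_Spaces.linear s s (\<Phi> i))"

definition fps_inverse_of :: "(nat \<Rightarrow> 'a \<Rightarrow> 'a::ab_group_add) \<Rightarrow> (nat \<Rightarrow> 'a \<Rightarrow> 'a) \<Rightarrow> bool" where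
  "fps_inverse_of \<Psi> \<Phi> \<longleftrightarrow>
     (\<forall>n x. (\<Sum>i\<le>n. \<Phi> i (\<Psi> (n - i) x)) = (if n = 0 then x else 0)) \<and>
     (\<forall>n x. (\<Sum>i\<le>n. \<Psi> i (\<Phi> (n - i) x)) = (if n = 0 then x else 0))"

text \<open>Equivalence: \<Theta>bar = \<Phi> \<Theta> \<Phi>^{-1}, coefficientwise.\<close>

definition equiv_deformations ::
  "('k::field \<Rightarrow> 'r::ab_group_add \<Rightarrow> 'r) \<Rightarrow> ('k \<Rightarrow> 's::ab_group_add \<Rightarrow> 's) \<Rightarrow>
   (nat \<Rightarrow> 'r \<Rightarrow> 'r \<Rightarrow> 'r) \<Rightarrow> (nat \<Rightarrow> 's \<Rightarrow> 's \<Rightarrow> 's) \<Rightarrow> (nat \<Rightarrow> 'r \<Rightarrow> 's) \<Rightarrow>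
   (nat \<Rightarrow> 'r \<Rightarrow> 'r \<Rightarrow> 'r) \<Rightarrow> (nat \<Rightarrow> 's \<Rightarrow> 's \<Rightarrow> 's) \<Rightarrow> (nat \<Rightarrow> 'r \<Rightarrow> 's) \<Rightarrow> bool" where
  "equiv_deformations sR sS MR MS F MR' MS' F' \<longleftrightarrow>
     (\<exists>\<Phi>R \<Phi>S \<Psi>R \<Psi>S. formal_iso sR \<Phi>R \<and> formal_iso sS \<Phi>S \<and>
        fps_inverse_of \<Psi>R \<Phi>R \<and> fps_inverse_of \<Psi>S \<Phi>S \<and>
        (\<forall>n x y. MR' n x y = (\<Sum>i\<le>n. \<Sum>j\<le>n - i. \<Sum>k\<le>n - i - j.
             \<Phi>R i (MR j (\<Psi>R k x) (\<Psi>R (n - i - j - k) y)))) \<and>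
        (\<forall>n x y. MS' n x y = (\<Sum>i\<le>n. \<Sum>j\<le>n - i. \<Sum>k\<le>n - i - j.
             \<Phi>S i (MS j (\<Psi>S k x) (\<Psi>S (n - i - j - k) y)))) \<and>
        (\<forall>n x. F' n x = (\<Sum>i\<le>n. \<Sum>j\<le>n - i. \<Phi>S i (F j (\<Psi>R (n - i - j) x)))))"

definition rigid ::
  "('k::field \<Rightarrow> 'r::ab_group_add \<Rightarrow> 'r) \<Rightarrow> ('r \<Rightarrow> 'r \<Rightarrow> 'r) \<Rightarrow>
   ('k \<Rightarrow> 's::ab_group_add \<Rightarrow> 's) \<Rightarrow> ('s \<Rightarrow> 's \<Rightarrow> 's) \<Rightarrow> ('r \<Rightarrow> 's) \<Rightarrow> bool" where
  "rigid sR mR sS mS f \<longleftrightarrow>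
     (\<forall>MR MS F. is_deformation sR mR sS mS f MR MS F \<longrightarrow>
        equiv_deformations sR sS MR MS F
          (\<lambda>i. if i = 0 then mR else (\<lambda>x y. 0))
          (\<lambda>i. if i = 0 then mS else (\<lambda>x y. 0))
          (\<lambda>i. if i = 0 then f else (\<lambda>x. 0)))"

end

theory Submission
  imports Defs
begin

definition sh :: "(nat \<Rightarrow> 'a::zero) \<Rightarrow> nat \<Rightarrow> 'a" where
  "sh u = (\<lambda>k. case k of 0 \<Rightarrow> 0 | Suc j \<Rightarrow> u j)"
definition cst :: "'a::zero \<Rightarrow> nat \<Rightarrow> 'a" where
  "cst x = (\<lambda>k. if k = 0 then x else 0)"
definition tlz :: "(nat \<Rightarrow> 'a) \<Rightarrow> nat \<Rightarrow> 'a" where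
  "tlz u = (\<lambda>k. u (Suc k))"
definition ap :: "(nat \<Rightarrow> 'a \<Rightarrow> 'b::comm_monoid_add) \<Rightarrow> (nat \<Rightarrow> 'a) \<Rightarrow> nat \<Rightarrow> 'b" where
  "ap L u = (\<lambda>n. \<Sum>i\<le>n. L i (u (n - i)))"
definition bp :: "(nat \<Rightarrow> 'a \<Rightarrow> 'b \<Rightarrow> 'c::comm_monoid_add) \<Rightarrow> (nat \<Rightarrow> 'a) \<Rightarrow> (nat \<Rightarrow> 'b) \<Rightarrow> nat \<Rightarrow> 'c" where
  "bp B u v = (\<lambda>n. \<Sum>j\<le>n. \<Sum>k\<le>n - j. B j (u k) (v (n - j - k)))"

lemma decomp: "(u::nat \<Rightarrow> 'a::monoid_add) = (\<lambda>k. cst (u 0) k + sh (tlz u) k)"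
  by (rule ext) (auto simp: cst_def sh_def tlz_def split: nat.split)

lemma sum_single:
  assumes "finite A" "a \<in> A" "\<And>x. x \<in> A \<Longrightarrow> x \<noteq> a \<Longrightarrow> g x = 0"
  shows "sum g A = g a"
proof -
  have "sum g A = g a + sum g (A - {a})" using assms by (simp add: sum.remove)
  also have "sum g (A - {a}) = 0" using assms by (intro sum.neutral) auto
  finally show ?thesis by simp
qed

definition biadd :: "(nat \<Rightarrow> 'a::ab_group_add \<Rightarrow> 'b::ab_group_add \<Rightarrow> 'c::ab_group_add) \<Rightarrow> bool" where
  "biadd B \<longleftrightarrow> (\<forall>j x. additive (B j x)) \<and> (\<forall>j y. additive (\<lambda>x. B j x y))"

lemma biadd_1: "biadd B \<Longrightarrow> B j (x + x') y = B j x y + B j x' y"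
  unfolding biadd_def using additive.add by fastforce
lemma biadd_2: "biadd B \<Longrightarrow> B j x (y + y') = B j x y + B j x y'"
  unfolding biadd_def using additive.add by fastforce
lemma biadd_01: "biadd B \<Longrightarrow> B j 0 y = 0"
  unfolding biadd_def using additive.zero by fastforce
lemma biadd_02: "biadd B \<Longrightarrow> B j x 0 = 0"
  unfolding biadd_def using additive.zero by fastforce
lemma biadd_d1: "biadd B \<Longrightarrow> B j (x - x') y = B j x y - B j x' y"
  unfolding biadd_def using additive.diff by fastforce
lemma biadd_d2: "biadd B \<Longrightarrow> B j x (y - y') = B j x y - B j x y'"
  unfolding biadd_def using additive.diff by fastforce
lemma biadd_n1: "biadd B \<Longrightarrow> B j (- x) y = - B j x y"
  unfolding biadd_def using additive.minus by fastforce
lemma biadd_n2: "biadd B \<Longrightarrow> B j x (- y) = - B j x y"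
  unfolding biadd_def using additive.minus by fastforce

definition adds :: "(nat \<Rightarrow> 'a::ab_group_add \<Rightarrow> 'b::ab_group_add) \<Rightarrow> bool" where
  "adds L \<longleftrightarrow> (\<forall>j. additive (L j))"

lemma adds_add: "adds L \<Longrightarrow> L j (x + x') = L j x + L j x'"
  unfolding adds_def using additive.add by fastforce
lemma adds_0: "adds L \<Longrightarrow> L j 0 = 0"
  unfolding adds_def using additive.zero by fastforce
lemma adds_diff: "adds L \<Longrightarrow> L j (x - x') = L j x - L j x'"
  unfolding adds_def using additive.diff by fastforce
lemma adds_neg: "adds L \<Longrightarrow> L j (- x) = - L j x"
  unfolding adds_def using additive.minus by fastforce
lemma adds_sum: "adds L \<Longrightarrow> L j (sum g A) = (\<Sum>a\<in>A. L j (g a))"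
  unfolding adds_def using additive.sum by fastforce

lemma bp_add1: "biadd B \<Longrightarrow> bp B (\<lambda>k. u k + u' k) v = (\<lambda>n. bp B u v n + bp B u' v n)"
  by (rule ext) (simp add: bp_def biadd_1 sum.distrib)
lemma bp_add2: "biadd B \<Longrightarrow> bp B u (\<lambda>k. v k + v' k) = (\<lambda>n. bp B u v n + bp B u v' n)"
  by (rule ext) (simp add: bp_def biadd_2 sum.distrib)
lemma ap_add: "adds L \<Longrightarrow> ap L (\<lambda>k. u k + u' k) = (\<lambda>n. ap L u n + ap L u' n)"
  by (rule ext) (simp add: ap_def adds_add sum.distrib)

lemma ap_sh: "adds L \<Longrightarrow> ap L (sh u) = sh (ap L u)"
proof (rule ext)
  fix n assume L: "adds L"
  show "ap L (sh u) n = sh (ap L u) n"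
  proof (cases n)
    case 0 then show ?thesis by (simp add: ap_def sh_def adds_0[OF L])
  next
    case (Suc m)
    have "ap L (sh u) (Suc m) = (\<Sum>i\<le>Suc m. L i (sh u (Suc m - i)))" by (simp add: ap_def)
    also have "\<dots> = (\<Sum>i\<le>m. L i (sh u (Suc m - i))) + L (Suc m) (sh u 0)" by simp
    also have "\<dots> = (\<Sum>i\<le>m. L i (u (m - i)))"
      by (auto simp: sh_def adds_0[OF L] Suc_diff_le intro!: sum.cong)
    finally show ?thesis using Suc by (simp add: sh_def ap_def)
  qed
qed

lemma ap_cst: "adds L \<Longrightarrow> ap L (cst x) n = L n x"
  unfolding ap_def cst_def
  by (subst sum_single[where a=n]) (auto simp: adds_0)

lemma ap_local: "(\<And>k. k \<le> n \<Longrightarrow> u k = u' k) \<Longrightarrow> ap L u n = ap L u' n"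
  unfolding ap_def by (intro sum.cong) auto

lemma bp_local: "(\<And>k. k \<le> n \<Longrightarrow> u k = u' k) \<Longrightarrow> (\<And>k. k \<le> n \<Longrightarrow> v k = v' k) \<Longrightarrow> bp B u v n = bp B u' v' n"
  unfolding bp_def by (intro sum.cong) auto


lemma bp_sh1: "biadd B \<Longrightarrow> bp B (sh u) v = sh (bp B u v)"
proof (rule ext)
  fix n assume B: "biadd B"
  show "bp B (sh u) v n = sh (bp B u v) n"
  proof (cases n)
    case 0 then show ?thesis by (simp add: bp_def sh_def biadd_01[OF B])
  next
    case (Suc m)
    have "bp B (sh u) v (Suc m) = (\<Sum>j\<le>Suc m. \<Sum>k\<le>Suc m - j. B j (sh u k) (v (Suc m - j - k)))"
      by (simp add: bp_def)
    also have "\<dots> = (\<Sum>j\<le>m. \<Sum>k\<le>Suc m - j. B j (sh u k) (v (Suc m - j - k)))"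
      by (simp add: sh_def biadd_01[OF B])
    also have "\<dots> = (\<Sum>j\<le>m. \<Sum>k\<le>m - j. B j (u k) (v (m - j - k)))"
    proof (rule sum.cong[OF refl])
      fix j assume "j \<in> {..m}"
      then have "Suc m - j = Suc (m - j)" by auto
      then show "(\<Sum>k\<le>Suc m - j. B j (sh u k) (v (Suc m - j - k))) = (\<Sum>k\<le>m - j. B j (u k) (v (m - j - k)))"
        by (simp only: sum.atMost_Suc_shift) (simp add: sh_def biadd_01[OF B])
    qed
    finally show ?thesis using Suc by (simp add: sh_def bp_def)
  qed
qed

lemma bp_sh2: "biadd B \<Longrightarrow> bp B u (sh v) = sh (bp B u v)"
proof (rule ext)
  fix n assume B: "biadd B"
  show "bp B u (sh v) n = sh (bp B u v) n"
  proof (cases n)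
    case 0 then show ?thesis by (simp add: bp_def sh_def biadd_02[OF B])
  next
    case (Suc m)
    have "bp B u (sh v) (Suc m) = (\<Sum>j\<le>Suc m. \<Sum>k\<le>Suc m - j. B j (u k) (sh v (Suc m - j - k)))"
      by (simp add: bp_def)
    also have "\<dots> = (\<Sum>j\<le>m. \<Sum>k\<le>Suc m - j. B j (u k) (sh v (Suc m - j - k)))"
      by (simp add: sh_def biadd_02[OF B])
    also have "\<dots> = (\<Sum>j\<le>m. \<Sum>k\<le>m - j. B j (u k) (v (m - j - k)))"
    proof (rule sum.cong[OF refl])
      fix j assume "j \<in> {..m}"
      then have e: "Suc m - j = Suc (m - j)" by auto
      have "(\<Sum>k\<le>Suc (m - j). B j (u k) (sh v (Suc (m - j) - k))) = (\<Sum>k\<le>m - j. B j (u k) (sh v (Suc (m - j) - k)))"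
        by (simp add: sh_def biadd_02[OF B])
      also have "\<dots> = (\<Sum>k\<le>m - j. B j (u k) (v (m - j - k)))"
        by (intro sum.cong refl) (simp add: sh_def Suc_diff_le)
      finally show "(\<Sum>k\<le>Suc m - j. B j (u k) (sh v (Suc m - j - k))) = (\<Sum>k\<le>m - j. B j (u k) (v (m - j - k)))"
        using e by simp
    qed
    finally show ?thesis using Suc by (simp add: sh_def bp_def)
  qed
qed

lemma bp_cst1: "biadd B \<Longrightarrow> bp B (cst x) v n = (\<Sum>j\<le>n. B j x (v (n - j)))"
  unfolding bp_def cst_def
  by (intro sum.cong refl, subst sum_single[where a=0]) (auto simp: biadd_01)

lemma bp_cst2: "biadd B \<Longrightarrow> bp B u (cst z) n = (\<Sum>j\<le>n. B j (u (n - j)) z)"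
  unfolding bp_def cst_def
  by (intro sum.cong refl, subst sum_single[where a="n - _"]) (auto simp: biadd_02)

lemma bp_cst: "biadd B \<Longrightarrow> bp B (cst x) (cst y) = (\<lambda>n. B n x y)"
  by (rule ext, simp add: bp_cst1, subst sum_single[where a=n]) (auto simp: cst_def biadd_02)

lemma ap_diff: assumes L: "adds L" and h: "\<And>k. k < n \<Longrightarrow> u k = u' k"
  shows "ap L u n = ap L u' n + L 0 (u n - u' n)"
proof -
  have "ap L u n = (\<Sum>i\<le>n. L i (u' (n - i)) + L i (u (n - i) - u' (n - i)))"
    unfolding ap_def by (intro sum.cong refl) (simp add: adds_diff[OF L])
  also have "\<dots> = ap L u' n + (\<Sum>i\<le>n. L i (u (n - i) - u' (n - i)))"
    by (simp add: ap_def sum.distrib)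
  also have "(\<Sum>i\<le>n. L i (u (n - i) - u' (n - i))) = L 0 (u n - u' n)"
    by (subst sum_single[where a=0]) (auto simp: h adds_0[OF L])
  finally show ?thesis .
qed

lemma bp_diff1: assumes B: "biadd B" and h: "\<And>k. k < n \<Longrightarrow> u k = u' k"
  shows "bp B u v n = bp B u' v n + B 0 (u n - u' n) (v 0)"
proof -
  have "bp B u v n = (\<Sum>j\<le>n. \<Sum>k\<le>n - j. B j (u' k) (v (n - j - k)) + B j (u k - u' k) (v (n - j - k)))"
    unfolding bp_def by (intro sum.cong refl) (simp add: biadd_d1[OF B])
  also have "\<dots> = bp B u' v n + (\<Sum>j\<le>n. \<Sum>k\<le>n - j. B j (u k - u' k) (v (n - j - k)))"
    by (simp add: bp_def sum.distrib)
  also have "(\<Sum>j\<le>n. \<Sum>k\<le>n - j. B j (u k - u' k) (v (n - j - k))) = (\<Sum>k\<le>n - 0. B 0 (u k - u' k) (v (n - 0 - k)))"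
  proof (rule sum_single)
    fix j assume "j \<in> {..n}" "j \<noteq> 0"
    then show "(\<Sum>k\<le>n - j. B j (u k - u' k) (v (n - j - k))) = 0"
      by (intro sum.neutral) (auto simp: h biadd_01[OF B])
  qed auto
  also have "\<dots> = B 0 (u n - u' n) (v 0)"
    by (subst sum_single[where a=n]) (auto simp: h biadd_01[OF B])
  finally show ?thesis .
qed

lemma bp_diff2: assumes B: "biadd B" and h: "\<And>k. k < n \<Longrightarrow> v k = v' k"
  shows "bp B u v n = bp B u v' n + B 0 (u 0) (v n - v' n)"
proof -
  have "bp B u v n = (\<Sum>j\<le>n. \<Sum>k\<le>n - j. B j (u k) (v' (n - j - k)) + B j (u k) (v (n - j - k) - v' (n - j - k)))"
    unfolding bp_def by (intro sum.cong refl) (simp add: biadd_d2[OF B])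
  also have "\<dots> = bp B u v' n + (\<Sum>j\<le>n. \<Sum>k\<le>n - j. B j (u k) (v (n - j - k) - v' (n - j - k)))"
    by (simp add: bp_def sum.distrib)
  also have "(\<Sum>j\<le>n. \<Sum>k\<le>n - j. B j (u k) (v (n - j - k) - v' (n - j - k))) = (\<Sum>k\<le>n - 0. B 0 (u k) (v (n - 0 - k) - v' (n - 0 - k)))"
  proof (rule sum_single)
    fix j assume "j \<in> {..n}" "j \<noteq> 0"
    then show "(\<Sum>k\<le>n - j. B j (u k) (v (n - j - k) - v' (n - j - k))) = 0"
      by (intro sum.neutral) (auto simp: h biadd_02[OF B])
  qed auto
  also have "\<dots> = B 0 (u 0) (v n - v' n)"
    by (subst sum_single[where a=0]) (auto simp: h biadd_02[OF B])
  finally show ?thesis .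
qed


definition zid :: "(nat \<Rightarrow> 'a \<Rightarrow> 'a \<Rightarrow> 'a::ab_group_add) \<Rightarrow> bool" where
  "zid B \<longleftrightarrow> (\<forall>n x y z. (\<Sum>i\<le>n. B i (B (n - i) x y) z)
               = (\<Sum>i\<le>n. B i x (B (n - i) y z) + B i x (B (n - i) z y)))"

definition Zs where
  "Zs B u v w n = bp B (bp B u v) w n - bp B u (bp B v w) n - bp B u (bp B w v) n"

lemma Zs_add1: "biadd B \<Longrightarrow> Zs B (\<lambda>k. u k + u' k) v w n = Zs B u v w n + Zs B u' v w n"
  by (simp add: Zs_def bp_add1 bp_add2)
lemma Zs_add2: "biadd B \<Longrightarrow> Zs B u (\<lambda>k. v k + v' k) w n = Zs B u v w n + Zs B u v' w n"
  by (simp add: Zs_def bp_add1 bp_add2)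
lemma Zs_add3: "biadd B \<Longrightarrow> Zs B u v (\<lambda>k. w k + w' k) n = Zs B u v w n + Zs B u v w' n"
  by (simp add: Zs_def bp_add1 bp_add2)
lemma Zs_sh1: "biadd B \<Longrightarrow> Zs B (sh u) v w n = sh (Zs B u v w) n"
  by (simp only: Zs_def bp_sh1 bp_sh2) (simp add: Zs_def sh_def split: nat.split)
lemma Zs_sh2: "biadd B \<Longrightarrow> Zs B u (sh v) w n = sh (Zs B u v w) n"
  by (simp only: Zs_def bp_sh1 bp_sh2) (simp add: Zs_def sh_def split: nat.split)
lemma Zs_sh3: "biadd B \<Longrightarrow> Zs B u v (sh w) n = sh (Zs B u v w) n"
  by (simp only: Zs_def bp_sh1 bp_sh2) (simp add: Zs_def sh_def split: nat.split)
lemma Zs_cst: "biadd B \<Longrightarrow> zid B \<Longrightarrow> Zs B (cst x) (cst y) (cst z) n = 0"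
  by (simp add: Zs_def bp_cst bp_cst1 bp_cst2 zid_def sum.distrib)

lemma zinb_series:
  assumes B: "biadd B" and Z: "zid B"
  shows "bp B (bp B u v) w n = bp B u (bp B v w) n + bp B u (bp B w v) n"
proof -
  have "\<forall>u v w. Zs B u v w n = 0"
  proof (induction n)
    case 0
    have s: "\<And>u v w. sh (Zs B u v w) 0 = 0" by (simp add: sh_def)
    have 1: "Zs B (cst x) (cst y) w 0 = 0" for x y w
      by (subst decomp[of w], simp only: Zs_add3[OF B] Zs_sh3[OF B] s Zs_cst[OF B Z]) simp
    have 2: "Zs B (cst x) v w 0 = 0" for x v w
      by (subst decomp[of v], simp only: Zs_add2[OF B] Zs_sh2[OF B] s 1) simp
    show ?case
      by (intro allI, subst decomp, simp only: Zs_add1[OF B] Zs_sh1[OF B] s 2) simp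
  next
    case (Suc n)
    have s: "\<And>u v w. sh (Zs B u v w) (Suc n) = 0" using Suc by (simp add: sh_def)
    have 1: "Zs B (cst x) (cst y) w (Suc n) = 0" for x y w
      by (subst decomp[of w], simp only: Zs_add3[OF B] Zs_sh3[OF B] s Zs_cst[OF B Z]) simp
    have 2: "Zs B (cst x) v w (Suc n) = 0" for x v w
      by (subst decomp[of v], simp only: Zs_add2[OF B] Zs_sh2[OF B] s 1) simp
    show ?case
      by (intro allI, subst decomp, simp only: Zs_add1[OF B] Zs_sh1[OF B] s 2) simp
  qed
  then show ?thesis by (simp add: Zs_def algebra_simps)
qed

definition fid :: "(nat \<Rightarrow> 'a \<Rightarrow> 'a \<Rightarrow> 'a) \<Rightarrow> (nat \<Rightarrow> 'b \<Rightarrow> 'b \<Rightarrow> 'b::ab_group_add) \<Rightarrow> (nat \<Rightarrow> 'a \<Rightarrow> 'b) \<Rightarrow> bool" where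
  "fid A B F \<longleftrightarrow> (\<forall>n x y. (\<Sum>i\<le>n. F i (A (n - i) x y))
             = (\<Sum>i\<le>n. \<Sum>j\<le>n - i. B i (F j x) (F (n - i - j) y)))"

definition Ws where
  "Ws A B F u v n = ap F (bp A u v) n - bp B (ap F u) (ap F v) n"

lemma Ws_add1: "biadd A \<Longrightarrow> biadd B \<Longrightarrow> adds F \<Longrightarrow> Ws A B F (\<lambda>k. u k + u' k) v n = Ws A B F u v n + Ws A B F u' v n"
  by (simp add: Ws_def bp_add1 bp_add2 ap_add)
lemma Ws_add2: "biadd A \<Longrightarrow> biadd B \<Longrightarrow> adds F \<Longrightarrow> Ws A B F u (\<lambda>k. v k + v' k) n = Ws A B F u v n + Ws A B F u v' n"
  by (simp add: Ws_def bp_add1 bp_add2 ap_add)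
lemma Ws_sh1: "biadd A \<Longrightarrow> biadd B \<Longrightarrow> adds F \<Longrightarrow> Ws A B F (sh u) v n = sh (Ws A B F u v) n"
  by (simp only: Ws_def bp_sh1 bp_sh2 ap_sh) (simp add: Ws_def sh_def split: nat.split)
lemma Ws_sh2: "biadd A \<Longrightarrow> biadd B \<Longrightarrow> adds F \<Longrightarrow> Ws A B F u (sh v) n = sh (Ws A B F u v) n"
  by (simp only: Ws_def bp_sh1 bp_sh2 ap_sh) (simp add: Ws_def sh_def split: nat.split)
lemma Ws_cst: "biadd A \<Longrightarrow> biadd B \<Longrightarrow> adds F \<Longrightarrow> fid A B F \<Longrightarrow> Ws A B F (cst x) (cst y) n = 0"
proof -
  assume a: "biadd A" "biadd B" "adds F" "fid A B F"
  have e: "ap F (cst x) = (\<lambda>k. F k x)" for x by (rule ext) (simp add: ap_cst a)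
  have "(\<Sum>i\<le>n. F i (A (n - i) x y)) = (\<Sum>i\<le>n. \<Sum>j\<le>n - i. B i (F j x) (F (n - i - j) y))"
    using a(4) unfolding fid_def by blast
  then show ?thesis by (simp only: Ws_def bp_cst[OF a(1)] e) (simp add: ap_def bp_def)
qed

lemma morph_series:
  assumes A: "biadd A" and B: "biadd B" and F: "adds F" and I: "fid A B F"
  shows "ap F (bp A u v) n = bp B (ap F u) (ap F v) n"
proof -
  have "\<forall>u v. Ws A B F u v n = 0"
  proof (induction n)
    case 0
    have s: "\<And>u v. sh (Ws A B F u v) 0 = 0" by (simp add: sh_def)
    have 1: "Ws A B F (cst x) v 0 = 0" for x v
      by (subst decomp[of v], simp only: Ws_add2[OF A B F] Ws_sh2[OF A B F] s Ws_cst[OF A B F I]) simp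
    show ?case
      by (intro allI, subst decomp, simp only: Ws_add1[OF A B F] Ws_sh1[OF A B F] s 1) simp
  next
    case (Suc n)
    have s: "\<And>u v. sh (Ws A B F u v) (Suc n) = 0" using Suc by (simp add: sh_def)
    have 1: "Ws A B F (cst x) v (Suc n) = 0" for x v
      by (subst decomp[of v], simp only: Ws_add2[OF A B F] Ws_sh2[OF A B F] s Ws_cst[OF A B F I]) simp
    show ?case
      by (intro allI, subst decomp, simp only: Ws_add1[OF A B F] Ws_sh1[OF A B F] s 1) simp
  qed
  then show ?thesis by (simp add: Ws_def algebra_simps)
qed


lemma sum_L2:
  fixes g :: "nat \<Rightarrow> nat \<Rightarrow> nat \<Rightarrow> 'a::comm_monoid_add"
  shows "(\<Sum>s\<le>n. \<Sum>i\<le>s. g i (s - i) (n - s)) = (\<Sum>i\<le>n. \<Sum>j\<le>n - i. g i j (n - i - j))"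
proof -
  have "(\<Sum>i\<le>n. \<Sum>j\<le>n - i. g i j (n - i - j)) = (\<Sum>(i,j)\<in>Sigma {..n} (\<lambda>i. {..n - i}). g i j (n - i - j))"
    by (rule sum.Sigma) auto
  also have "Sigma {..n} (\<lambda>i. {..n - i}) = {(i,j). i + j \<le> n}" by auto
  also have "(\<Sum>(i,j)\<in>{(i,j). i + j \<le> n}. g i j (n - i - j)) = (\<Sum>k\<le>n. \<Sum>i\<le>k. g i (k - i) (n - i - (k - i)))"
    by (rule sum.triangle_reindex_eq)
  also have "\<dots> = (\<Sum>s\<le>n. \<Sum>i\<le>s. g i (s - i) (n - s))"
    by (intro sum.cong refl) auto
  finally show ?thesis by simp
qed

definition conv :: "(nat \<Rightarrow> 'b \<Rightarrow> 'c::comm_monoid_add) \<Rightarrow> (nat \<Rightarrow> 'a \<Rightarrow> 'b) \<Rightarrow> nat \<Rightarrow> 'a \<Rightarrow> 'c" where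
  "conv A B = (\<lambda>n x. \<Sum>i\<le>n. A i (B (n - i) x))"

definition dl :: "nat \<Rightarrow> 'a::zero \<Rightarrow> 'a" where
  "dl = (\<lambda>n x. if n = 0 then x else 0)"

lemma conv_assoc:
  assumes "adds A"
  shows "conv (conv A B) C = conv A (conv B C)"
proof (intro ext)
  fix n x
  have "conv A (conv B C) n x = (\<Sum>i\<le>n. \<Sum>j\<le>n - i. A i (B j (C (n - i - j) x)))"
    by (simp add: conv_def adds_sum[OF assms])
  also have "\<dots> = (\<Sum>s\<le>n. \<Sum>i\<le>s. A i (B (s - i) (C (n - s) x)))"
    by (rule sum_L2[symmetric])
  also have "\<dots> = conv (conv A B) C n x"
    by (simp add: conv_def)
  finally show "conv (conv A B) C n x = conv A (conv B C) n x" by simp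
qed

lemma conv_dl_left: "conv dl (A :: nat \<Rightarrow> 'a \<Rightarrow> 'b::comm_monoid_add) = A"
  by (intro ext) (simp add: conv_def dl_def)

lemma conv_dl_right: assumes "adds A" shows "conv A dl = A"
proof (intro ext)
  fix n x
  show "conv A dl n x = A n x"
    unfolding conv_def by (subst sum_single[where a=n]) (auto simp: dl_def adds_0[OF assms])
qed

fun linv :: "(nat \<Rightarrow> 'a \<Rightarrow> 'a::ab_group_add) \<Rightarrow> nat \<Rightarrow> 'a \<Rightarrow> 'a" where
  "linv P n = (if n = 0 then (\<lambda>x. x) else (\<lambda>x. - (\<Sum>i<n. linv P i (P (n - i) x))))"

declare linv.simps[simp del]

lemma linv_0: "linv P 0 = (\<lambda>x. x)" by (simp add: linv.simps)
lemma linv_Suc: "n > 0 \<Longrightarrow> linv P n = (\<lambda>x. - (\<Sum>i<n. linv P i (P (n - i) x)))"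
  by (simp add: linv.simps)

lemma linv_left:
  assumes "\<And>x. P 0 x = x"
  shows "conv (linv P) P = dl"
proof (intro ext)
  fix n x
  show "conv (linv P) P n x = dl n x"
  proof (cases "n = 0")
    case True then show ?thesis by (simp add: conv_def dl_def linv_0 assms)
  next
    case False
    have "conv (linv P) P n x = (\<Sum>i<n. linv P i (P (n - i) x)) + linv P n (P 0 x)"
      by (simp add: conv_def lessThan_Suc_atMost[symmetric])
    then show ?thesis using False by (simp add: linv_Suc assms dl_def)
  qed
qed

lemma linv_adds:
  assumes "adds P"
  shows "adds (linv P)"
proof -
  have "additive (linv P n)" for n
  proof (induction n rule: less_induct)
    case (less n)
    show ?case
    proof (cases "n = 0")
      case True then show ?thesis by (simp add: linv_0 additive_def)
    next
      case False
      have "linv P i (P (n - i) (x + y)) = linv P i (P (n - i) x) + linv P i (P (n - i) y)" if "i < n" for i x y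
        using less[OF that] by (simp add: adds_add[OF assms] additive.add)
      then show ?thesis using False
        by (simp add: linv_Suc additive_def sum.distrib)
    qed
  qed
  then show ?thesis by (simp add: adds_def)
qed

lemma linv_right:
  assumes P: "adds P" and P0: "\<And>x. P 0 x = x"
  shows "conv P (linv P) = dl"
proof -
  let ?F = "linv P"
  let ?L = "linv ?F"
  have F: "adds ?F" by (rule linv_adds[OF P])
  have F0: "\<And>x. ?F 0 x = x" by (simp add: linv_0)
  have L: "adds ?L" by (rule linv_adds[OF F])
  have "P = conv dl P" by (simp add: conv_dl_left)
  also have "\<dots> = conv (conv ?L ?F) P" by (simp add: linv_left[of "linv P", OF F0])
  also have "\<dots> = conv ?L (conv ?F P)" by (rule conv_assoc[OF L])
  also have "\<dots> = ?L" by (simp add: linv_left[of P, OF P0] conv_dl_right[OF L])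
  finally have "P = ?L" .
  then show ?thesis using linv_left[of "linv P", OF F0] by simp
qed

lemma lin_vs1: "Vector_Spaces.linear s1 s2 f \<Longrightarrow> vector_space s1"
  by (simp add: Vector_Spaces.linear_iff)
lemma lin_vs2: "Vector_Spaces.linear s1 s2 f \<Longrightarrow> vector_space s2"
  by (simp add: Vector_Spaces.linear_iff)
lemma lin_additive: "Vector_Spaces.linear s1 s2 f \<Longrightarrow> additive f"
  by (simp add: Vector_Spaces.linear_iff additive_def)
lemma lin_id: "vector_space s \<Longrightarrow> Vector_Spaces.linear s s (\<lambda>x. x)"
  by (simp add: Vector_Spaces.linear_iff)
lemma lin_zero: "vector_space s1 \<Longrightarrow> vector_space s2 \<Longrightarrow> Vector_Spaces.linear s1 s2 (\<lambda>x. 0)"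
  by (simp add: Vector_Spaces.linear_iff module.scale_zero_right module_iff_vector_space)
lemma lin_comp: "Vector_Spaces.linear s1 s2 f \<Longrightarrow> Vector_Spaces.linear s2 s3 g \<Longrightarrow> Vector_Spaces.linear s1 s3 (\<lambda>x. g (f x))"
  using Vector_Spaces.linear_compose[of s1 s2 f s3 g] by (simp add: comp_def)
lemma lin_add: "Vector_Spaces.linear s1 s2 f \<Longrightarrow> Vector_Spaces.linear s1 s2 g \<Longrightarrow> Vector_Spaces.linear s1 s2 (\<lambda>x. f x + g x)"
  by (simp add: Vector_Spaces.linear_iff vector_space.vector_space_assms(1))
lemma lin_neg: "Vector_Spaces.linear s1 s2 f \<Longrightarrow> Vector_Spaces.linear s1 s2 (\<lambda>x. - f x)"
  by (simp add: Vector_Spaces.linear_iff module.scale_minus_right module_iff_vector_space)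
lemma lin_diff: "Vector_Spaces.linear s1 s2 f \<Longrightarrow> Vector_Spaces.linear s1 s2 g \<Longrightarrow> Vector_Spaces.linear s1 s2 (\<lambda>x. f x - g x)"
  using lin_add[of s1 s2 f "\<lambda>x. - g x"] lin_neg[of s1 s2 g] by simp
lemma lin_sum:
  assumes "vector_space s1" "vector_space s2" "\<And>i. i \<in> A \<Longrightarrow> Vector_Spaces.linear s1 s2 (f i)"
  shows "Vector_Spaces.linear s1 s2 (\<lambda>x. \<Sum>i\<in>A. f i x)"
  using assms(3)
proof (induction A rule: infinite_finite_induct)
  case (infinite A) then show ?case using lin_zero[OF assms(1,2)] by simp
next
  case empty then show ?case using lin_zero[OF assms(1,2)] by simp
next
  case (insert a A)
  then show ?case using lin_add[of s1 s2 "f a" "\<lambda>x. \<Sum>i\<in>A. f i x"] by simp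
qed

lemma bilin_biadd: "(\<And>i. bilin s1 s2 s3 (M i)) \<Longrightarrow> biadd M"
  unfolding biadd_def bilin_def by (meson lin_additive)

lemma lin_adds: "(\<And>i. Vector_Spaces.linear s1 s2 (P i)) \<Longrightarrow> adds P"
  unfolding adds_def by (meson lin_additive)

lemma linv_linear:
  assumes P: "\<And>i. Vector_Spaces.linear s s (P i)"
  shows "Vector_Spaces.linear s s (linv P n)"
proof (induction n rule: less_induct)
  case (less n)
  have vs: "vector_space s" using lin_vs1[OF P] .
  show ?case
  proof (cases "n = 0")
    case True then show ?thesis by (simp add: linv_0 lin_id[OF vs])
  next
    case False
    have "Vector_Spaces.linear s s (\<lambda>x. linv P i (P (n - i) x))" if "i < n" for i
      by (rule lin_comp[OF P less[OF that]])
    then have "Vector_Spaces.linear s s (\<lambda>x. \<Sum>i<n. linv P i (P (n - i) x))"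
      by (intro lin_sum[OF vs vs]) auto
    then show ?thesis using False by (simp add: linv_Suc lin_neg)
  qed
qed

definition errA :: "(nat \<Rightarrow> 'a \<Rightarrow> 'a \<Rightarrow> 'a::ab_group_add) \<Rightarrow> (nat \<Rightarrow> 'a \<Rightarrow> 'a) \<Rightarrow> nat \<Rightarrow> 'a \<Rightarrow> 'a \<Rightarrow> 'a" where
  "errA M P k x y = bp M (\<lambda>i. P i x) (\<lambda>i. P i y) k - P k (M 0 x y)"

definition errF :: "(nat \<Rightarrow> 'a \<Rightarrow> 'b::ab_group_add) \<Rightarrow> (nat \<Rightarrow> 'a \<Rightarrow> 'a) \<Rightarrow> (nat \<Rightarrow> 'b \<Rightarrow> 'b) \<Rightarrow> nat \<Rightarrow> 'a \<Rightarrow> 'b" where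
  "errF F P Q k x = ap F (\<lambda>i. P i x) k - Q k (F 0 x)"

lemma errA_0: "(\<And>x. P 0 x = x) \<Longrightarrow> errA M P 0 x y = 0"
  by (simp add: errA_def bp_def)
lemma errF_0: "(\<And>x. P 0 x = x) \<Longrightarrow> (\<And>x. Q 0 x = x) \<Longrightarrow> errF F P Q 0 x = 0"
  by (simp add: errF_def ap_def)

lemma errA_local: "(\<And>k. k \<le> n \<Longrightarrow> P k = P' k) \<Longrightarrow> errA M P n x y = errA M P' n x y"
  unfolding errA_def by (subst bp_local[of n "\<lambda>i. P i x" "\<lambda>i. P' i x" "\<lambda>i. P i y" "\<lambda>i. P' i y"]) auto
lemma errF_local: "(\<And>k. k \<le> n \<Longrightarrow> P k = P' k) \<Longrightarrow> (\<And>k. k \<le> n \<Longrightarrow> Q k = Q' k) \<Longrightarrow> errF F P Q n x = errF F P' Q' n x"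
  unfolding errF_def by (subst ap_local[of n "\<lambda>i. P i x" "\<lambda>i. P' i x"]) auto

lemma errA_add2:
  assumes M: "biadd M" and P: "adds P"
  shows "errA M P n x (a + b) = errA M P n x a + errA M P n x b"
proof -
  have "(\<lambda>i. P i (a + b)) = (\<lambda>i. P i a + P i b)" by (simp add: adds_add[OF P])
  then show ?thesis by (simp add: errA_def bp_add2[OF M] biadd_2[OF M] adds_add[OF P])
qed

lemma cocycle_A:
  assumes M: "biadd M" and Z: "zid M"
    and m0: "\<And>x y z. M 0 (M 0 x y) z = M 0 x (M 0 y z) + M 0 x (M 0 z y)"
    and P: "adds P" and P0: "\<And>x. P 0 x = x"
    and hyp: "\<And>k x y. k < N \<Longrightarrow> errA M P k x y = 0"
  shows "zd2 (M 0) (M 0) (M 0) (errA M P N) = (\<lambda>x y z. 0)"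
proof (intro ext)
  fix x y z
  let ?E = "errA M P N"
  let ?m = "M 0"
  have ag: "\<And>k a b. k < N \<Longrightarrow> bp M (\<lambda>i. P i a) (\<lambda>i. P i b) k = P k (?m a b)"
    using hyp by (simp add: errA_def)
  have e: "\<And>a b. bp M (\<lambda>i. P i a) (\<lambda>i. P i b) N = ?E a b + P N (?m a b)"
    by (simp add: errA_def)
  have L: "bp M (bp M (\<lambda>i. P i x) (\<lambda>i. P i y)) (\<lambda>i. P i z) N
      = ?E (?m x y) z + P N (?m (?m x y) z) + ?m (?E x y) z"
    by (subst bp_diff1[OF M, where u'="\<lambda>i. P i (?m x y)"]) (simp_all add: ag e P0)
  have R1: "bp M (\<lambda>i. P i x) (bp M (\<lambda>i. P i y) (\<lambda>i. P i z)) N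
      = ?E x (?m y z) + P N (?m x (?m y z)) + ?m x (?E y z)"
    by (subst bp_diff2[OF M, where v'="\<lambda>i. P i (?m y z)"]) (simp_all add: ag e P0)
  have R2: "bp M (\<lambda>i. P i x) (bp M (\<lambda>i. P i z) (\<lambda>i. P i y)) N
      = ?E x (?m z y) + P N (?m x (?m z y)) + ?m x (?E z y)"
    by (subst bp_diff2[OF M, where v'="\<lambda>i. P i (?m z y)"]) (simp_all add: ag e P0)
  have S: "bp M (bp M (\<lambda>i. P i x) (\<lambda>i. P i y)) (\<lambda>i. P i z) N
     = bp M (\<lambda>i. P i x) (bp M (\<lambda>i. P i y) (\<lambda>i. P i z)) N + bp M (\<lambda>i. P i x) (bp M (\<lambda>i. P i z) (\<lambda>i. P i y)) N"
    by (rule zinb_series[OF M Z])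
  have PN: "P N (?m (?m x y) z) = P N (?m x (?m y z)) + P N (?m x (?m z y))"
    by (simp add: m0 adds_add[OF P])
  show "zd2 ?m ?m ?m ?E x y z = 0"
    using S unfolding L R1 R2 PN
    by (simp add: zd2_def errA_add2[OF M P] biadd_2[OF M] algebra_simps)
qed


lemma cocycle_F:
  assumes A: "biadd A" and B: "biadd B" and F: "adds F" and I: "fid A B F"
    and hom: "\<And>x y. F 0 (A 0 x y) = B 0 (F 0 x) (F 0 y)"
    and P: "adds P" and P0: "\<And>x. P 0 x = x" and Q: "adds Q" and Q0: "\<And>x. Q 0 x = x"
    and hA: "\<And>k x y. k < N \<Longrightarrow> errA A P k x y = 0"
    and hB: "\<And>k x y. k < N \<Longrightarrow> errA B Q k x y = 0"
    and hF: "\<And>k x. k < N \<Longrightarrow> errF F P Q k x = 0"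
  shows "(\<lambda>x y. F 0 (errA A P N x y) - errA B Q N (F 0 x) (F 0 y)
      - zd1 (A 0) (\<lambda>x s. B 0 (F 0 x) s) (\<lambda>s x. B 0 s (F 0 x)) (errF F P Q N) x y) = (\<lambda>x y. 0)"
proof (intro ext)
  fix x y
  let ?EA = "errA A P N" and ?EB = "errA B Q N" and ?EF = "errF F P Q N"
  have agA: "\<And>k a b. k < N \<Longrightarrow> bp A (\<lambda>i. P i a) (\<lambda>i. P i b) k = P k (A 0 a b)"
    using hA by (simp add: errA_def)
  have agF: "\<And>k a. k < N \<Longrightarrow> ap F (\<lambda>i. P i a) k = Q k (F 0 a)"
    using hF by (simp add: errF_def)
  have eA: "\<And>a b. bp A (\<lambda>i. P i a) (\<lambda>i. P i b) N = ?EA a b + P N (A 0 a b)"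
    by (simp add: errA_def)
  have eB: "\<And>a b. bp B (\<lambda>i. Q i a) (\<lambda>i. Q i b) N = ?EB a b + Q N (B 0 a b)"
    by (simp add: errA_def)
  have eF: "\<And>a. ap F (\<lambda>i. P i a) N = ?EF a + Q N (F 0 a)"
    by (simp add: errF_def)
  have g0: "\<And>a. ap F (\<lambda>i. P i a) 0 = F 0 a" by (simp add: ap_def P0)
  have L: "ap F (bp A (\<lambda>i. P i x) (\<lambda>i. P i y)) N = ?EF (A 0 x y) + Q N (F 0 (A 0 x y)) + F 0 (?EA x y)"
    by (subst ap_diff[OF F, where u'="\<lambda>i. P i (A 0 x y)"]) (simp_all add: agA eA eF)
  have R1: "bp B (ap F (\<lambda>i. P i x)) (ap F (\<lambda>i. P i y)) N
     = bp B (\<lambda>i. Q i (F 0 x)) (ap F (\<lambda>i. P i y)) N + B 0 (?EF x) (F 0 y)"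
    by (subst bp_diff1[OF B, where u'="\<lambda>i. Q i (F 0 x)"]) (simp_all add: agF eF g0)
  have R2: "bp B (\<lambda>i. Q i (F 0 x)) (ap F (\<lambda>i. P i y)) N
     = ?EB (F 0 x) (F 0 y) + Q N (B 0 (F 0 x) (F 0 y)) + B 0 (F 0 x) (?EF y)"
    by (subst bp_diff2[OF B, where v'="\<lambda>i. Q i (F 0 y)"]) (simp_all add: agF eF eB Q0)
  have S: "ap F (bp A (\<lambda>i. P i x) (\<lambda>i. P i y)) N = bp B (ap F (\<lambda>i. P i x)) (ap F (\<lambda>i. P i y)) N"
    by (rule morph_series[OF A B F I])
  show "F 0 (?EA x y) - ?EB (F 0 x) (F 0 y) - zd1 (A 0) (\<lambda>x s. B 0 (F 0 x) s) (\<lambda>s x. B 0 s (F 0 x)) ?EF x y = 0"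
    using S unfolding L R1 R2 hom
    by (simp add: zd1_def algebra_simps)
qed

lemma update_A:
  assumes M: "biadd M" and P: "adds P" and b: "additive b" and N: "N > 0" and P0: "\<And>x. P 0 x = x"
  shows "errA M (P(N := (\<lambda>x. P N x - b x))) N x y = errA M P N x y - zd1 (M 0) (M 0) (M 0) b x y"
proof -
  let ?P' = "P(N := (\<lambda>x. P N x - b x))"
  have a: "\<And>k a. k < N \<Longrightarrow> ?P' k a = P k a" by simp
  have p0: "\<And>a. ?P' 0 a = a" using N P0 by simp
  have "bp M (\<lambda>i. ?P' i x) (\<lambda>i. ?P' i y) N = bp M (\<lambda>i. P i x) (\<lambda>i. ?P' i y) N + M 0 (- b x) y"
    by (subst bp_diff1[OF M, where u'="\<lambda>i. P i x"]) (use N in \<open>simp_all add: P0\<close>)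
  also have "bp M (\<lambda>i. P i x) (\<lambda>i. ?P' i y) N = bp M (\<lambda>i. P i x) (\<lambda>i. P i y) N + M 0 x (- b y)"
    by (subst bp_diff2[OF M, where v'="\<lambda>i. P i y"]) (simp_all add: P0)
  finally show ?thesis
    by (simp add: errA_def zd1_def biadd_n1[OF M] biadd_n2[OF M] algebra_simps)
qed

lemma update_F:
  assumes F: "adds F" and P0: "\<And>x. P 0 x = x"
  shows "errF F (P(N := (\<lambda>x. P N x - b x))) (Q(N := (\<lambda>x. Q N x - c x))) N x
     = errF F P Q N x - (F 0 (b x) - c (F 0 x))"
proof -
  let ?P' = "P(N := (\<lambda>x. P N x - b x))"
  have "ap F (\<lambda>i. ?P' i x) N = ap F (\<lambda>i. P i x) N + F 0 (- b x)"
    by (subst ap_diff[OF F, where u'="\<lambda>i. P i x"]) simp_all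
  then show ?thesis
    by (simp add: errF_def adds_neg[OF F] algebra_simps)
qed

lemma errA_bilin:
  assumes vs: "vector_space s" and M: "\<And>i. bilin s s s (M i)" and P: "\<And>i. Vector_Spaces.linear s s (P i)"
  shows "bilin s s s (errA M P N)"
proof -
  have M1: "\<And>i x. Vector_Spaces.linear s s (M i x)" and M2: "\<And>i y. Vector_Spaces.linear s s (\<lambda>x. M i x y)"
    using M by (auto simp: bilin_def)
  have "Vector_Spaces.linear s s (\<lambda>y. errA M P N x y)" for x
  proof -
    have "Vector_Spaces.linear s s (\<lambda>y. \<Sum>j\<le>N. \<Sum>k\<le>N - j. M j (P k x) (P (N - j - k) y))"
      by (intro lin_sum[OF vs vs] lin_comp[OF P M1])
    moreover have "Vector_Spaces.linear s s (\<lambda>y. P N (M 0 x y))"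
      by (rule lin_comp[OF M1 P])
    ultimately show ?thesis unfolding errA_def bp_def by (rule lin_diff)
  qed
  moreover have "Vector_Spaces.linear s s (\<lambda>x. errA M P N x y)" for y
  proof -
    have "Vector_Spaces.linear s s (\<lambda>x. \<Sum>j\<le>N. \<Sum>k\<le>N - j. M j (P k x) (P (N - j - k) y))"
      by (intro lin_sum[OF vs vs] lin_comp[OF P M2])
    moreover have "Vector_Spaces.linear s s (\<lambda>x. P N (M 0 x y))"
      by (rule lin_comp[OF M2 P])
    ultimately show ?thesis unfolding errA_def bp_def by (rule lin_diff)
  qed
  ultimately show ?thesis by (simp add: bilin_def)
qed

lemma errF_linear:
  assumes vR: "vector_space sR" and vS: "vector_space sS"
    and F: "\<And>i. Vector_Spaces.linear sR sS (F i)"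
    and P: "\<And>i. Vector_Spaces.linear sR sR (P i)" and Q: "\<And>i. Vector_Spaces.linear sS sS (Q i)"
  shows "Vector_Spaces.linear sR sS (errF F P Q N)"
proof -
  have "Vector_Spaces.linear sR sS (\<lambda>x. \<Sum>i\<le>N. F i (P (N - i) x))"
    by (intro lin_sum[OF vR vS] lin_comp[OF P F])
  moreover have "Vector_Spaces.linear sR sS (\<lambda>x. Q N (F 0 x))"
    by (rule lin_comp[OF F Q])
  ultimately have "Vector_Spaces.linear sR sS (\<lambda>x. errF F P Q N x)"
    unfolding errF_def ap_def by (rule lin_diff)
  then show ?thesis by simp
qed


theorem corollary4p2:
  fixes sR :: "'k::field \<Rightarrow> 'r::ab_group_add \<Rightarrow> 'r"
    and sS :: "'k \<Rightarrow> 's::ab_group_add \<Rightarrow> 's"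
    and mR :: "'r \<Rightarrow> 'r \<Rightarrow> 'r" and mS :: "'s \<Rightarrow> 's \<Rightarrow> 's" and f :: "'r \<Rightarrow> 's"
  assumes "zinb_morphism sR mR sS mS f"
    and "H2_f_zero sR mR sS mS f"
  shows "rigid sR mR sS mS f"
proof -
  have zR: "zinbiel sR mR" and zS: "zinbiel sS mS" and fl: "Vector_Spaces.linear sR sS f"
    and fh: "\<And>x y. f (mR x y) = mS (f x) (f y)"
    using assms(1) by (auto simp: zinb_morphism_def)
  have vR: "vector_space sR" and vS: "vector_space sS" using zR zS by (auto simp: zinbiel_def)
  have mRz: "\<And>x y z. mR (mR x y) z = mR x (mR y z) + mR x (mR z y)" using zR by (simp add: zinbiel_def)
  have mSz: "\<And>x y z. mS (mS x y) z = mS x (mS y z) + mS x (mS z y)" using zS by (simp add: zinbiel_def)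
  have H2: "\<And>c. c \<in> C2_f sR sS \<Longrightarrow> d2_f mR mS f c = (\<lambda>x y z. 0, \<lambda>x y z. 0, \<lambda>x y. 0) \<Longrightarrow>
        \<exists>b\<in>C1_f sR sS. d1_f mR mS f b = c"
    using assms(2) by (auto simp: H2_f_zero_def)
  show ?thesis unfolding rigid_def
  proof (intro allI impI)
    fix MR MS F assume D: "is_deformation sR mR sS mS f MR MS F"
    have MR0: "MR 0 = mR" and MS0: "MS 0 = mS" and F0: "F 0 = f" using D by (auto simp: is_deformation_def)
    have CR: "\<And>i. bilin sR sR sR (MR i)" and CS: "\<And>i. bilin sS sS sS (MS i)"
      and CF: "\<And>i. Vector_Spaces.linear sR sS (F i)"
      using D by (auto simp: is_deformation_def C2_f_def)
    have ZR: "zid MR" and ZS: "zid MS" and FI: "fid MR MS F"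
      using D unfolding is_deformation_def zid_def fid_def by blast+
    have BR: "biadd MR" by (rule bilin_biadd[OF CR])
    have BS: "biadd MS" by (rule bilin_biadd[OF CS])
    have AF: "adds F" by (rule lin_adds[OF CF])
    define c where "c P Q N = (errA MR P N, errA MS Q N, errF F P Q N)" for P Q N
    have key: "\<exists>b. b \<in> C1_f sR sS \<and> d1_f mR mS f b = c P Q N"
      if P: "\<And>k. Vector_Spaces.linear sR sR (P k)" and Q: "\<And>k. Vector_Spaces.linear sS sS (Q k)"
        and P0: "\<And>x. P 0 x = x" and Q0: "\<And>x. Q 0 x = x"
        and hA: "\<And>k x y. k < N \<Longrightarrow> errA MR P k x y = 0"
        and hB: "\<And>k x y. k < N \<Longrightarrow> errA MS Q k x y = 0"
        and hF: "\<And>k x. k < N \<Longrightarrow> errF F P Q k x = 0"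
      for P Q N
    proof -
      have aP: "adds P" by (rule lin_adds[OF P])
      have aQ: "adds Q" by (rule lin_adds[OF Q])
      have c1: "zd2 mR mR mR (errA MR P N) = (\<lambda>x y z. 0)"
        using cocycle_A[OF BR ZR _ aP P0 hA] by (simp add: MR0 mRz)
      have c2: "zd2 mS mS mS (errA MS Q N) = (\<lambda>x y z. 0)"
        using cocycle_A[OF BS ZS _ aQ Q0 hB] by (simp add: MS0 mSz)
      have c3: "(\<lambda>x y. f (errA MR P N x y) - errA MS Q N (f x) (f y)
          - zd1 mR (\<lambda>x s. mS (f x) s) (\<lambda>s x. mS s (f x)) (errF F P Q N) x y) = (\<lambda>x y. 0)"
        using cocycle_F[OF BR BS AF FI _ aP P0 aQ Q0 hA hB hF] by (simp add: MR0 MS0 F0 fh)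
      have d: "d2_f mR mS f (c P Q N) = (\<lambda>x y z. 0, \<lambda>x y z. 0, \<lambda>x y. 0)"
        unfolding c_def d2_f_def using c1 c2 c3 by simp
      have m: "c P Q N \<in> C2_f sR sS"
        unfolding c_def C2_f_def
        using errA_bilin[OF vR CR P] errA_bilin[OF vS CS Q] errF_linear[OF vR vS CF P Q] by simp
      show ?thesis using H2[OF m d] by blast
    qed
    define stp where "stp PQ N = (let b = (SOME b. b \<in> C1_f sR sS \<and> d1_f mR mS f b = c (fst PQ) (snd PQ) N)
        in ((fst PQ)(N := (\<lambda>x. fst PQ N x - fst b x)), (snd PQ)(N := (\<lambda>x. snd PQ N x - snd b x))))"
      for PQ :: "(nat \<Rightarrow> 'r \<Rightarrow> 'r) \<times> (nat \<Rightarrow> 's \<Rightarrow> 's)" and N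
    define T where "T = rec_nat ((\<lambda>k. if k = 0 then (\<lambda>x. x) else (\<lambda>x. 0)), (\<lambda>k. if k = 0 then (\<lambda>x. x) else (\<lambda>x. 0)))
        (\<lambda>n PQ. stp PQ (Suc n))"
    have T0: "T 0 = ((\<lambda>k. if k = 0 then (\<lambda>x. x) else (\<lambda>x. 0)), (\<lambda>k. if k = 0 then (\<lambda>x. x) else (\<lambda>x. 0)))"
      by (simp add: T_def)
    have TS: "T (Suc n) = stp (T n) (Suc n)" for n by (simp add: T_def)
    define Inv where "Inv n \<longleftrightarrow> (\<forall>k. Vector_Spaces.linear sR sR (fst (T n) k)) \<and> (\<forall>k. Vector_Spaces.linear sS sS (snd (T n) k))
       \<and> (\<forall>x. fst (T n) 0 x = x) \<and> (\<forall>x. snd (T n) 0 x = x)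
       \<and> (\<forall>k\<le>n. (\<forall>x y. errA MR (fst (T n)) k x y = 0) \<and> (\<forall>x y. errA MS (snd (T n)) k x y = 0)
                  \<and> (\<forall>x. errF F (fst (T n)) (snd (T n)) k x = 0))" for n
    have TSk: "fst (T (Suc n)) k = fst (T n) k \<and> snd (T (Suc n)) k = snd (T n) k" if "k \<noteq> Suc n" for n k
      using that by (simp add: TS stp_def Let_def)
    have inv: "Inv n" for n
    proof (induction n)
      case 0
      have l1: "Vector_Spaces.linear sR sR (fst (T 0) k)" for k
        by (cases "k = 0") (simp_all add: T0 lin_id[OF vR] lin_zero[OF vR vR])
      have l2: "Vector_Spaces.linear sS sS (snd (T 0) k)" for k
        by (cases "k = 0") (simp_all add: T0 lin_id[OF vS] lin_zero[OF vS vS])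
      show ?case unfolding Inv_def using l1 l2
        by (simp add: T0 errA_0 errF_0)
    next
      case (Suc n)
      let ?P = "fst (T n)" and ?Q = "snd (T n)" and ?N = "Suc n"
      have I: "\<And>k. Vector_Spaces.linear sR sR (?P k)" "\<And>k. Vector_Spaces.linear sS sS (?Q k)"
        "\<And>x. ?P 0 x = x" "\<And>x. ?Q 0 x = x"
        "\<And>k x y. k \<le> n \<Longrightarrow> errA MR ?P k x y = 0" "\<And>k x y. k \<le> n \<Longrightarrow> errA MS ?Q k x y = 0"
        "\<And>k x. k \<le> n \<Longrightarrow> errF F ?P ?Q k x = 0"
        using Suc.IH unfolding Inv_def by auto
      have ex: "\<exists>b. b \<in> C1_f sR sS \<and> d1_f mR mS f b = c ?P ?Q ?N"
        by (rule key[of ?P ?Q, OF I(1-4)]) (auto intro: I(5-7))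
      define b where "b = (SOME b. b \<in> C1_f sR sS \<and> d1_f mR mS f b = c ?P ?Q ?N)"
      have hb: "b \<in> C1_f sR sS \<and> d1_f mR mS f b = c ?P ?Q ?N"
        unfolding b_def by (rule someI_ex[OF ex])
      obtain bR bS where bb: "b = (bR, bS)" by (cases b)
      have bl: "Vector_Spaces.linear sR sR bR" "Vector_Spaces.linear sS sS bS"
        using hb bb by (auto simp: C1_f_def)
      have be: "zd1 mR mR mR bR = errA MR ?P ?N" "zd1 mS mS mS bS = errA MS ?Q ?N"
        "(\<lambda>x. f (bR x) - bS (f x)) = errF F ?P ?Q ?N"
        using hb bb by (auto simp: d1_f_def c_def)
      have Te: "T ?N = (?P(?N := (\<lambda>x. ?P ?N x - bR x)), ?Q(?N := (\<lambda>x. ?Q ?N x - bS x)))"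
        by (simp add: TS stp_def Let_def b_def[symmetric] bb)
      have l1: "Vector_Spaces.linear sR sR (fst (T ?N) k)" for k
        by (cases "k = ?N") (simp_all add: Te I(1) lin_diff bl)
      have l2: "Vector_Spaces.linear sS sS (snd (T ?N) k)" for k
        by (cases "k = ?N") (simp_all add: Te I(2) lin_diff bl)
      have z1: "fst (T ?N) 0 x = x" for x by (simp add: Te I(3))
      have z2: "snd (T ?N) 0 x = x" for x by (simp add: Te I(4))
      have e1: "errA MR (fst (T ?N)) k x y = 0" if "k \<le> ?N" for k x y
      proof (cases "k = ?N")
        case True
        have "errA MR (fst (T ?N)) ?N x y = errA MR ?P ?N x y - zd1 (MR 0) (MR 0) (MR 0) bR x y"
          unfolding Te fst_conv
          by (rule update_A[OF BR lin_adds[OF I(1)] lin_additive[OF bl(1)]]) (simp_all add: I(3))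
        then show ?thesis using True be(1) by (simp add: MR0)
      next
        case False
        then have "errA MR (fst (T ?N)) k x y = errA MR ?P k x y"
          using that by (intro errA_local) (simp add: Te)
        then show ?thesis using False that I(5) by simp
      qed
      have e2: "errA MS (snd (T ?N)) k x y = 0" if "k \<le> ?N" for k x y
      proof (cases "k = ?N")
        case True
        have "errA MS (snd (T ?N)) ?N x y = errA MS ?Q ?N x y - zd1 (MS 0) (MS 0) (MS 0) bS x y"
          unfolding Te snd_conv
          by (rule update_A[OF BS lin_adds[OF I(2)] lin_additive[OF bl(2)]]) (simp_all add: I(4))
        then show ?thesis using True be(2) by (simp add: MS0)
      next
        case False
        then have "errA MS (snd (T ?N)) k x y = errA MS ?Q k x y"
          using that by (intro errA_local) (simp add: Te)
        then show ?thesis using False that I(6) by simp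
      qed
      have e3: "errF F (fst (T ?N)) (snd (T ?N)) k x = 0" if "k \<le> ?N" for k x
      proof (cases "k = ?N")
        case True
        have "errF F (fst (T ?N)) (snd (T ?N)) ?N x = errF F ?P ?Q ?N x - (F 0 (bR x) - bS (F 0 x))"
          unfolding Te fst_conv snd_conv
          by (rule update_F[where P="?P", OF AF I(3)])
        then show ?thesis using True fun_cong[OF be(3), of x] by (simp add: F0)
      next
        case False
        then have "errF F (fst (T ?N)) (snd (T ?N)) k x = errF F ?P ?Q k x"
          using that by (intro errF_local) (simp_all add: Te)
        then show ?thesis using False that I(7) by simp
      qed
      show ?case unfolding Inv_def by (intro conjI allI impI; (rule l1 l2 z1 z2 e1 e2 e3)?; simp)
    qed
    have coh: "fst (T m) k = fst (T k) k \<and> snd (T m) k = snd (T k) k" if "k \<le> m" for k m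
      using that
    proof (induction m)
      case 0 then show ?case by simp
    next
      case (Suc m)
      show ?case
      proof (cases "k = Suc m")
        case True then show ?thesis by simp
      next
        case False
        then have "k \<le> m" using Suc.prems by simp
        then show ?thesis using Suc.IH TSk[OF False] by simp
      qed
    qed
    define PR where "PR k = fst (T k) k" for k
    define PS where "PS k = snd (T k) k" for k
    have PRl: "Vector_Spaces.linear sR sR (PR k)" for k using inv[of k] by (simp add: Inv_def PR_def)
    have PSl: "Vector_Spaces.linear sS sS (PS k)" for k using inv[of k] by (simp add: Inv_def PS_def)
    have PR0: "PR 0 x = x" for x using inv[of 0] by (simp add: Inv_def PR_def)
    have PS0: "PS 0 x = x" for x using inv[of 0] by (simp add: Inv_def PS_def)
    have eR: "errA MR PR N x y = 0" for N x y
    proof -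
      have "errA MR PR N x y = errA MR (fst (T N)) N x y"
        by (rule errA_local) (metis PR_def coh)
      then show ?thesis using inv[of N] by (simp add: Inv_def)
    qed
    have eS: "errA MS PS N x y = 0" for N x y
    proof -
      have "errA MS PS N x y = errA MS (snd (T N)) N x y"
        by (rule errA_local) (metis PS_def coh)
      then show ?thesis using inv[of N] by (simp add: Inv_def)
    qed
    have eF: "errF F PR PS N x = 0" for N x
    proof -
      have "errF F PR PS N x = errF F (fst (T N)) (snd (T N)) N x"
        by (rule errF_local) (metis PR_def PS_def coh)+
      then show ?thesis using inv[of N] by (simp add: Inv_def)
    qed
    show "equiv_deformations sR sS MR MS F (\<lambda>i. if i = 0 then mR else (\<lambda>x y. 0))
          (\<lambda>i. if i = 0 then mS else (\<lambda>x y. 0)) (\<lambda>i. if i = 0 then f else (\<lambda>x. 0))"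
    proof -
      have aR: "adds PR" by (rule lin_adds[OF PRl])
      have aS: "adds PS" by (rule lin_adds[OF PSl])
      have LR: "adds (linv PR)" by (rule linv_adds[OF aR])
      have LS: "adds (linv PS)" by (rule linv_adds[OF aS])
      have bpR: "bp MR (\<lambda>k. PR k x) (\<lambda>k. PR k y) m = PR m (mR x y)" for m x y
        using eR[of m x y] by (simp add: errA_def MR0)
      have bpS: "bp MS (\<lambda>k. PS k x) (\<lambda>k. PS k y) m = PS m (mS x y)" for m x y
        using eS[of m x y] by (simp add: errA_def MS0)
      have apF: "ap F (\<lambda>k. PR k x) m = PS m (f x)" for m x
        using eF[of m x] by (simp add: errF_def F0)
      have invR: "fps_inverse_of PR (linv PR)"
        unfolding fps_inverse_of_def
        using fun_cong[OF fun_cong[OF linv_left[of PR, OF PR0]]] fun_cong[OF fun_cong[OF linv_right[OF aR PR0]]]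
        by (simp add: conv_def dl_def)
      have invS: "fps_inverse_of PS (linv PS)"
        unfolding fps_inverse_of_def
        using fun_cong[OF fun_cong[OF linv_left[of PS, OF PS0]]] fun_cong[OF fun_cong[OF linv_right[OF aS PS0]]]
        by (simp add: conv_def dl_def)
      have isoR: "formal_iso sR (linv PR)"
        unfolding formal_iso_def using linv_linear[OF PRl] by (simp add: linv_0 id_def)
      have isoS: "formal_iso sS (linv PS)"
        unfolding formal_iso_def using linv_linear[OF PSl] by (simp add: linv_0 id_def)
      have eqR: "(if n = 0 then mR else (\<lambda>x y. 0)) x y = (\<Sum>i\<le>n. \<Sum>j\<le>n - i. \<Sum>k\<le>n - i - j.
             linv PR i (MR j (PR k x) (PR (n - i - j - k) y)))" for n x y
      proof -
        have "(\<Sum>i\<le>n. \<Sum>j\<le>n - i. \<Sum>k\<le>n - i - j. linv PR i (MR j (PR k x) (PR (n - i - j - k) y)))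
            = (\<Sum>i\<le>n. linv PR i (bp MR (\<lambda>k. PR k x) (\<lambda>k. PR k y) (n - i)))"
          unfolding bp_def adds_sum[OF LR] ..
        also have "\<dots> = conv (linv PR) PR n (mR x y)" by (simp add: bpR conv_def)
        also have "\<dots> = dl n (mR x y)" by (simp add: linv_left[of PR, OF PR0])
        finally show ?thesis by (simp add: dl_def)
      qed
      have eqS: "(if n = 0 then mS else (\<lambda>x y. 0)) x y = (\<Sum>i\<le>n. \<Sum>j\<le>n - i. \<Sum>k\<le>n - i - j.
             linv PS i (MS j (PS k x) (PS (n - i - j - k) y)))" for n x y
      proof -
        have "(\<Sum>i\<le>n. \<Sum>j\<le>n - i. \<Sum>k\<le>n - i - j. linv PS i (MS j (PS k x) (PS (n - i - j - k) y)))
            = (\<Sum>i\<le>n. linv PS i (bp MS (\<lambda>k. PS k x) (\<lambda>k. PS k y) (n - i)))"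
          unfolding bp_def adds_sum[OF LS] ..
        also have "\<dots> = conv (linv PS) PS n (mS x y)" by (simp add: bpS conv_def)
        also have "\<dots> = dl n (mS x y)" by (simp add: linv_left[of PS, OF PS0])
        finally show ?thesis by (simp add: dl_def)
      qed
      have eqF: "(if n = 0 then f else (\<lambda>x. 0)) x = (\<Sum>i\<le>n. \<Sum>j\<le>n - i. linv PS i (F j (PR (n - i - j) x)))" for n x
      proof -
        have "(\<Sum>i\<le>n. \<Sum>j\<le>n - i. linv PS i (F j (PR (n - i - j) x)))
            = (\<Sum>i\<le>n. linv PS i (ap F (\<lambda>k. PR k x) (n - i)))"
          unfolding ap_def adds_sum[OF LS] ..
        also have "\<dots> = conv (linv PS) PS n (f x)" by (simp add: apF conv_def)
        also have "\<dots> = dl n (f x)" by (simp add: linv_left[of PS, OF PS0])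
        finally show ?thesis by (simp add: dl_def)
      qed
      show ?thesis unfolding equiv_deformations_def
        using isoR isoS invR invS eqR eqS eqF by blast
    qed
  qed
qed

end
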